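(* Let $\mathcal V=\{v^{(1)},\dots,v^{(p)}\}\subset(\mathbb{R}\cup\{-\infty\})^n$ be a finite set, $V$ the matrix with columns $v^{(k)}$, with no row and no column identically $-\infty$, and let $$T_i(x)=\inf_{k\in[p],\,V_{ik}\neq-\infty}\Big[-V_{ik}+\max_{j\in[n],\,j\neq i}(V_{jk}+x_j)\Big],\qquad i\in[n].$$ Let $W=\max_{v\in\mathcal V}\|v\|_H$. Then any finite eigenvector $u\in\mathbb{R}^n$ of $T$ (i.e. $T(u)=\lambda+u$ for some $\lambda$) satisfies $\|u\|_H\le W$.
   Context: $-\infty+c=-\infty$, $\max\emptyset=-\infty$. Hilbert's seminorm: $\|x\|_H=\max_i x_i-\min_i x_i$ (equal to $+\infty$ if some but not all entries are $-\infty$). *)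

theory Defs
  imports "HOL-Library.Extended_Real"
begin

text \<open>Vectors in (R u {-infinity})^n are functions from a finite index type 'n to ereal
  that never take the value +infinity. The matrix V has rows indexed by 'n and
  columns indexed by 'p.\<close>

text \<open>Hilbert's seminorm: max_i x_i - min_i x_i, computed in ereal
  (so it is +infinity if some but not all entries are -infinity).\<close>
definition hilbert_sn :: "('n::finite \<Rightarrow> ereal) \<Rightarrow> ereal" where
  "hilbert_sn x = Max (range x) - Min (range x)"

text \<open>The operator T; Sup of the empty set is -infinity in ereal, matching max of empty = -infinity.\<close>
definition shapley_T :: "('n::finite \<Rightarrow> 'p::finite \<Rightarrow> ereal) \<Rightarrow> ('n \<Rightarrow> real) \<Rightarrow> 'n \<Rightarrow> ereal" where
  "shapley_T V x i =
     (INF k \<in> {k. V i k \<noteq> -\<infinity>}. - V i k + (SUP j \<in> {j. j \<noteq> i}. V j k + ereal (x j)))"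

end

theory Submission
  imports Defs
begin

lemma ex_argmax: fixes f :: "'a::finite \<Rightarrow> 'b::linorder" shows "\<exists>m. \<forall>j. f j \<le> f m"
proof -
  have "Max (range f) \<in> range f" by (rule Max_in) auto
  then obtain m where "f m = Max (range f)" by (metis imageE)
  then show ?thesis by (metis Max_ge finite rangeI finite_imageI)
qed

lemma ex_argmin: fixes f :: "'a::finite \<Rightarrow> 'b::linorder" shows "\<exists>m. \<forall>j. f m \<le> f j"
proof -
  have "Min (range f) \<in> range f" by (rule Min_in) auto
  then obtain m where "f m = Min (range f)" by (metis imageE)
  then show ?thesis by (metis Min_le finite rangeI finite_imageI)
qed

lemma ereal_diff_ge: fixes A B :: ereal
  assumes "A \<ge> ereal x" "B \<le> ereal y" shows "A - B \<ge> ereal (x - y)"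
  using assms by (cases A; cases B) auto

lemma ereal_aux1: fixes S :: ereal assumes "S \<le> ereal (x + y)" shows "- ereal x + S \<le> ereal y"
  using assms by (cases S) auto

lemma ereal_aux2: fixes S :: ereal assumes "S \<ge> ereal y" shows "- ereal x + S \<ge> ereal (- x + y)"
  using assms by (cases S) auto

theorem lemma6p2:
  fixes V :: "'n::finite \<Rightarrow> 'p::finite \<Rightarrow> ereal"
    and u :: "'n \<Rightarrow> real"
    and lam :: ereal
  assumes entries: "\<And>i k. V i k \<noteq> \<infinity>"
    and no_row: "\<And>i. \<exists>k. V i k \<noteq> -\<infinity>"
    and no_col: "\<And>k. \<exists>i. V i k \<noteq> -\<infinity>"
    and eig: "\<And>i. shapley_T V u i = lam + ereal (u i)"
  shows "hilbert_sn (\<lambda>i. ereal (u i)) \<le> Max (range (\<lambda>k. hilbert_sn (\<lambda>i. V i k)))"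
proof -
  obtain m where m: "\<And>j. u j \<le> u m" using ex_argmax by metis
  obtain i0 where i0: "\<And>j. u i0 \<le> u j" using ex_argmin by metis
  have maxu: "Max (range (\<lambda>i. ereal (u i))) = ereal (u m)"
    by (rule Max_eqI) (auto simp: m)
  have minu: "Min (range (\<lambda>i. ereal (u i))) = ereal (u i0)"
    by (rule Min_eqI) (auto simp: i0)
  have lhs: "hilbert_sn (\<lambda>i. ereal (u i)) = ereal (u m - u i0)"
    unfolding hilbert_sn_def maxu minu by simp
  have colge: "\<And>k. hilbert_sn (\<lambda>i. V i k) \<le> Max (range (\<lambda>k. hilbert_sn (\<lambda>i. V i k)))"
    by (rule Max_ge) auto
  have colnn: "hilbert_sn (\<lambda>i. V i k) \<ge> 0" for k
  proof -
    obtain i where "V i k \<noteq> -\<infinity>" using no_col by blast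
    then obtain r where r: "V i k = ereal r" using entries by (cases "V i k") auto
    have a: "Max (range (\<lambda>i. V i k)) \<ge> ereal r" unfolding r[symmetric] by (rule Max_ge) auto
    have b: "Min (range (\<lambda>i. V i k)) \<le> ereal r" unfolding r[symmetric] by (rule Min_le) auto
    show ?thesis unfolding hilbert_sn_def using ereal_diff_ge[OF a b] by (simp add: zero_ereal_def)
  qed
  show ?thesis
  proof (cases "u m = u i0")
    case True
    then show ?thesis unfolding lhs using order_trans[OF colnn[of undefined] colge[of undefined]] by (simp add: zero_ereal_def[symmetric])
  next
    case False
    hence mi0: "m \<noteq> i0" by auto
    show ?thesis
    proof (cases "\<exists>i k. V i k = -\<infinity>")
      case True
      then obtain i k where ik: "V i k = -\<infinity>" by blast
      obtain i' where "V i' k \<noteq> -\<infinity>" using no_col by blast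
      then obtain r where r: "V i' k = ereal r" using entries by (cases "V i' k") auto
      have a: "Max (range (\<lambda>i. V i k)) \<ge> ereal r" unfolding r[symmetric] by (rule Max_ge) auto
      have b: "Min (range (\<lambda>i. V i k)) = -\<infinity>" 
      proof -
        have "Min (range (\<lambda>i. V i k)) \<le> V i k" by (rule Min_le) auto
        thus ?thesis using ik by simp
      qed
      have "hilbert_sn (\<lambda>i. V i k) = \<infinity>" unfolding hilbert_sn_def b using a by auto
      then show ?thesis using colge[of k] by auto
    next
      case False
      have fin: "V i k \<noteq> -\<infinity>" for i k using False by auto
      define R where "R i k = real_of_ereal (V i k)" for i k
      have VR: "V i k = ereal (R i k)" for i k unfolding R_def using fin[of i k] entries[of i k]
        by (cases "V i k") auto
      have T1: "shapley_T V u i \<le> - V i k + (SUP j\<in>{j. j \<noteq> i}. V j k + ereal (u j))" for i k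
        unfolding shapley_T_def using fin[of i k] by (intro INF_lower) auto
      have lam0: "lam \<le> 0"
      proof -
        obtain i where i: "\<And>j. R j undefined + u j \<le> R i undefined + u i"
          using ex_argmax[of "\<lambda>j. R j undefined + u j"] by metis
        have "(SUP j\<in>{j. j \<noteq> i}. V j undefined + ereal (u j)) \<le> ereal (R i undefined + u i)"
          by (rule SUP_least) (simp add: VR i)
        hence "- V i undefined + (SUP j\<in>{j. j \<noteq> i}. V j undefined + ereal (u j)) \<le> ereal (u i)"
          unfolding VR[of i] by (rule ereal_aux1)
        hence "lam + ereal (u i) \<le> ereal (u i)" using T1[of i undefined] eig[of i] by simp
        thus ?thesis by (cases lam) auto
      qed
      define g where "g k = - V i0 k + (SUP j\<in>{j. j \<noteq> i0}. V j k + ereal (u j))" for k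
      have "shapley_T V u i0 = Inf (range g)" unfolding shapley_T_def g_def using fin by simp
      also have "\<dots> = Min (range g)" by (rule cInf_eq_Min) auto
      finally have "shapley_T V u i0 \<in> range g" using Min_in[of "range g"] by auto
      then obtain k where k: "lam + ereal (u i0) = g k" using eig[of i0] by auto
      have S: "(SUP j\<in>{j. j \<noteq> i0}. V j k + ereal (u j)) \<ge> ereal (R m k + u m)"
        using mi0 by (intro SUP_upper2[of m]) (auto simp: VR)
      have "g k \<ge> ereal (- R i0 k + (R m k + u m))" unfolding g_def VR[of i0] by (rule ereal_aux2[OF S])
      hence "ereal (- R i0 k + (R m k + u m)) \<le> lam + ereal (u i0)" using k by simp
      hence key: "u m - u i0 \<le> R i0 k - R m k" using lam0 by (cases lam) auto
      have a: "Max (range (\<lambda>i. V i k)) \<ge> ereal (R i0 k)" unfolding VR by (rule Max_ge) auto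
      have b: "Min (range (\<lambda>i. V i k)) \<le> ereal (R m k)" unfolding VR by (rule Min_le) auto
      have "hilbert_sn (\<lambda>i. V i k) \<ge> ereal (R i0 k - R m k)"
        unfolding hilbert_sn_def by (rule ereal_diff_ge[OF a b])
      then show ?thesis unfolding lhs using key colge[of k] by (meson ereal_less_eq(3) order_trans)
    qed
  qed
qed

end
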